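(* Let $n\ge3$ and $r\in[3,n]$. Then: (1) $\mathfrak b_{a_2}\cdot\tilde{\mathfrak b}_r=\prod_{i=1}^r\mathfrak b_{a_i}$; (2) $I_{C_n}=\mathfrak b_{a_2}\cdot\tilde{\mathfrak b}_r\cdot\prod_{i=r+1}^{n+1}\mathfrak b_{a_i}$.
   Context: Let $K$ be a field, $N\ge2$, $R=K[X_1,\dots,X_N]$, $X=X_1$, $Y=X_2$. $[x,y]=\{z\in\mathbb Z:x\le z\le y\}$. For $i\in\mathbb N^+$, $\mathfrak b_i=\langle X^i,Y^i\rangle$. Fix an integer $n\ge 3$ and positive integers $a_1,\dots,a_{n+1}$ with (C1) $a_{n+1}=a_1+\dots+a_{n-1}+2a_n$ and (C2) $a_{i+1}>2(a_1+\dots+a_i)$ for all $i\in[1,n-1]$. For $I\subseteq[1,n+1]$ put $a_I=\sum_{i\in I}a_i$ ($a_\emptyset=0$). $C_n=\{a_I:I\subseteq[1,n+1]\}$, $\mu=a_{[1,n+1]}$, and $I_{C_n}=\langle X^{\mu-c}Y^c:c\in C_n\rangle$. For $r\in[3,n]$, $\tilde{\mathfrak b}_r$ is the ideal generated by $\mathfrak b_{a_1}\mathfrak b_{a_3}\mathfrak b_{a_4}\cdots\mathfrak b_{a_r}$ together with the monomial $X^{a_{[3,r]}-a_2}Y^{a_3-a_2}$. *)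

theory Defs
  imports "HOL-Library.Poly_Mapping"
begin

(* Polynomials in variables indexed by nat (variable X_(i+1) has index i),
  coefficients in 'a.  A monomial is an exponent vector nat \<Rightarrow>\<^sub>0 nat. *)
type_synonym 'a mpoly = "(nat \<Rightarrow>\<^sub>0 nat) \<Rightarrow>\<^sub>0 'a"

definition polyring :: "nat \<Rightarrow> 'a::comm_ring_1 mpoly set" where
  "polyring N = {p :: 'a mpoly. \<forall>m\<in>Poly_Mapping.keys p. \<forall>v\<in>Poly_Mapping.keys m. v < N}"

(* The ideal of R generated by a set S (S assumed inside R): all finite R-linear
  combinations of elements of S. *)
definition gen_ideal :: "nat \<Rightarrow> 'a::comm_ring_1 mpoly set \<Rightarrow> 'a mpoly set" where
  "gen_ideal N S = {p. \<exists>fs. (\<forall>(c, s)\<in>set fs. c \<in> polyring N \<and> s \<in> S)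
       \<and> p = sum_list (map (\<lambda>(c, s). c * s) fs)}"

definition ideal_mult :: "nat \<Rightarrow> 'a::comm_ring_1 mpoly set \<Rightarrow> 'a mpoly set \<Rightarrow> 'a mpoly set" where
  "ideal_mult N I J = gen_ideal N {p * q | p q. p \<in> I \<and> q \<in> J}"

definition ideal_prod :: "nat \<Rightarrow> 'a::comm_ring_1 mpoly set list \<Rightarrow> 'a mpoly set" where
  "ideal_prod N Is = foldr (ideal_mult N) Is (polyring N)"

(* The monomial X^i Y^j where X = X_1 (index 0), Y = X_2 (index 1). *)
definition monoXY :: "nat \<Rightarrow> nat \<Rightarrow> 'a::comm_ring_1 mpoly" where
  "monoXY i j = Poly_Mapping.single (Poly_Mapping.single 0 i + Poly_Mapping.single 1 j) 1"

definition bideal :: "nat \<Rightarrow> nat \<Rightarrow> 'a::comm_ring_1 mpoly set" where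
  "bideal N i = gen_ideal N {monoXY i 0, monoXY 0 i}"

definition aI :: "(nat \<Rightarrow> nat) \<Rightarrow> nat set \<Rightarrow> nat" where
  "aI a I = (\<Sum>i\<in>I. a i)"

definition Cset :: "(nat \<Rightarrow> nat) \<Rightarrow> nat \<Rightarrow> nat set" where
  "Cset a n = {aI a I | I. I \<subseteq> {1..n+1}}"

definition ICn :: "nat \<Rightarrow> (nat \<Rightarrow> nat) \<Rightarrow> nat \<Rightarrow> 'a::comm_ring_1 mpoly set" where
  "ICn N a n = gen_ideal N {monoXY (aI a {1..n+1} - c) c | c. c \<in> Cset a n}"

definition btilde :: "nat \<Rightarrow> (nat \<Rightarrow> nat) \<Rightarrow> nat \<Rightarrow> 'a::comm_ring_1 mpoly set" where
  "btilde N a r = gen_ideal N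
     (ideal_prod N (map (\<lambda>i. bideal N (a i)) (1 # [3..<r+1]))
      \<union> {monoXY (aI a {3..r} - a 2) (a 3 - a 2)})"

end

theory Submission
  imports Defs
begin

lemma polyring_mult:
  assumes "p \<in> polyring N" "q \<in> polyring N" shows "p * q \<in> polyring N"
proof -
  { fix m v assume m: "m \<in> Poly_Mapping.keys (p*q)" and v: "v \<in> Poly_Mapping.keys m"
    from m keys_mult obtain x y where "m = x + y" "x \<in> Poly_Mapping.keys p" "y \<in> Poly_Mapping.keys q" by blast
    with v keys_add[of x y] assms have "v < N" unfolding polyring_def by blast }
  then show ?thesis unfolding polyring_def by blast
qed

lemma polyring_add:
  assumes "p \<in> polyring N" "q \<in> polyring N" shows "p + q \<in> polyring N"
  using assms keys_add[of p q] unfolding polyring_def by blast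

lemma polyring_one: "1 \<in> polyring N"
  unfolding polyring_def by simp

lemma monoXY_polyring: "N \<ge> 2 \<Longrightarrow> monoXY i j \<in> polyring N"
  unfolding polyring_def monoXY_def
  using keys_add[of "Poly_Mapping.single 0 i" "Poly_Mapping.single (1::nat) j"] by (fastforce split: if_splits)

lemma monoXY_mult: "monoXY i j * monoXY k l = (monoXY (i+k) (j+l) :: 'a::comm_ring_1 mpoly)"
  unfolding monoXY_def by (simp add: mult_single single_add algebra_simps)

definition is_ideal :: "nat \<Rightarrow> 'a::comm_ring_1 mpoly set \<Rightarrow> bool" where
  "is_ideal N I \<longleftrightarrow> 0 \<in> I \<and> (\<forall>x\<in>I. \<forall>y\<in>I. x + y \<in> I) \<and> (\<forall>c\<in>polyring N. \<forall>x\<in>I. c * x \<in> I)"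

lemma gen_ideal_ideal: fixes S :: "'a::comm_ring_1 mpoly set" shows "is_ideal N (gen_ideal N S)"
  unfolding is_ideal_def
proof (intro conjI ballI)
  show "0 \<in> gen_ideal N S" unfolding gen_ideal_def by (rule CollectI, rule exI[of _ "[]"]) simp
next
  fix x y :: "'a mpoly" assume "x \<in> gen_ideal N S" "y \<in> gen_ideal N S"
  then obtain fs gs where "\<forall>(c, s)\<in>set fs. c \<in> polyring N \<and> s \<in> S" "x = sum_list (map (\<lambda>(c, s). c * s) fs)"
    "\<forall>(c, s)\<in>set gs. c \<in> polyring N \<and> s \<in> S" "y = sum_list (map (\<lambda>(c, s). c * s) gs)"
    unfolding gen_ideal_def by blast
  then show "x + y \<in> gen_ideal N S" unfolding gen_ideal_def
    by (intro CollectI exI[of _ "fs @ gs"]) auto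
next
  fix c x :: "'a mpoly" assume c: "c \<in> polyring N" and "x \<in> gen_ideal N S"
  then obtain fs where fs: "\<forall>(c, s)\<in>set fs. c \<in> polyring N \<and> s \<in> S" "x = sum_list (map (\<lambda>(c, s). c * s) fs)"
    unfolding gen_ideal_def by blast
  have "c * x = sum_list (map (\<lambda>(d, s). d * s) (map (\<lambda>(d, s). (c*d, s)) fs))"
    unfolding fs(2) by (induction fs) (auto simp: algebra_simps)
  moreover have "\<forall>(d, s)\<in>set (map (\<lambda>(d, s). (c*d, s)) fs). d \<in> polyring N \<and> s \<in> S"
    using fs(1) c polyring_mult by fastforce
  ultimately show "c * x \<in> gen_ideal N S" unfolding gen_ideal_def by blast
qed

lemma gen_ideal_base: "s \<in> S \<Longrightarrow> s \<in> gen_ideal N S"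
  unfolding gen_ideal_def by (intro CollectI exI[of _ "[(1, s)]"]) (auto simp: polyring_one)

lemma gen_ideal_mult_base: "s \<in> S \<Longrightarrow> c \<in> polyring N \<Longrightarrow> c * s \<in> gen_ideal N S"
  unfolding gen_ideal_def by (intro CollectI exI[of _ "[(c, s)]"]) auto

lemma gen_ideal_least:
  assumes "S \<subseteq> I" "is_ideal N I" shows "gen_ideal N S \<subseteq> I"
proof
  fix x assume "x \<in> gen_ideal N S"
  then obtain fs where fs: "\<forall>(c, s)\<in>set fs. c \<in> polyring N \<and> s \<in> S" "x = sum_list (map (\<lambda>(c, s). c * s) fs)"
    unfolding gen_ideal_def by blast
  have "sum_list (map (\<lambda>(c, s). c * s) fs) \<in> I" using fs(1)
  proof (induction fs)
    case Nil then show ?case using assms(2) unfolding is_ideal_def by simp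
  next
    case (Cons p fs) then obtain c s where p: "p = (c,s)" by (cases p)
    with Cons assms show ?case unfolding is_ideal_def by auto
  qed
  with fs show "x \<in> I" by simp
qed

lemma gen_ideal_mono: "S \<subseteq> gen_ideal N T \<Longrightarrow> gen_ideal N S \<subseteq> gen_ideal N T"
  by (rule gen_ideal_least[OF _ gen_ideal_ideal])

lemma gen_ideal_eqI: "S \<subseteq> gen_ideal N T \<Longrightarrow> T \<subseteq> gen_ideal N S \<Longrightarrow> gen_ideal N S = gen_ideal N T"
  using gen_ideal_mono by blast

lemma gen_ideal_idem: "is_ideal N I \<Longrightarrow> gen_ideal N I = I"
  using gen_ideal_least[of I I N] gen_ideal_base[of _ I N] by blast

lemma gen_ideal_Un_gen: "gen_ideal N (gen_ideal N S \<union> T) = gen_ideal N (S \<union> T)"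
proof (rule gen_ideal_eqI)
  show "gen_ideal N S \<union> T \<subseteq> gen_ideal N (S \<union> T)"
    using gen_ideal_mono[of S N "S \<union> T"] gen_ideal_base[of _ "S \<union> T" N] by blast
  show "S \<union> T \<subseteq> gen_ideal N (gen_ideal N S \<union> T)"
    using gen_ideal_base[of _ "gen_ideal N S \<union> T" N] gen_ideal_base[of _ S N] by blast
qed

lemma ideal_mult_gen:
  "ideal_mult N (gen_ideal N S) (gen_ideal N T) = gen_ideal N {s * t | s t. s \<in> S \<and> t \<in> T}"
  (is "_ = gen_ideal N ?ST")
proof (unfold ideal_mult_def, rule gen_ideal_eqI)
  show "?ST \<subseteq> gen_ideal N {p * q |p q. p \<in> gen_ideal N S \<and> q \<in> gen_ideal N T}"
    using gen_ideal_base[of _ S N] gen_ideal_base[of _ T N]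
    by (auto intro!: gen_ideal_base)
  have key: "p * q \<in> gen_ideal N ?ST" if p: "p \<in> gen_ideal N S" and q: "q \<in> gen_ideal N T" for p q
  proof -
    have sT: "gen_ideal N T \<subseteq> {q. s * q \<in> gen_ideal N ?ST}" if "s \<in> S" for s
    proof (rule gen_ideal_least)
      show "T \<subseteq> {q. s * q \<in> gen_ideal N ?ST}" using that by (auto intro!: gen_ideal_base)
      show "is_ideal N {q. s * q \<in> gen_ideal N ?ST}"
        using gen_ideal_ideal[of N ?ST] unfolding is_ideal_def
        by (auto simp: distrib_left mult.left_commute[of s])
    qed
    have "gen_ideal N S \<subseteq> {p. \<forall>q\<in>gen_ideal N T. p * q \<in> gen_ideal N ?ST}"
    proof (rule gen_ideal_least)
      show "S \<subseteq> {p. \<forall>q\<in>gen_ideal N T. p * q \<in> gen_ideal N ?ST}" using sT by blast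
      show "is_ideal N {p. \<forall>q\<in>gen_ideal N T. p * q \<in> gen_ideal N ?ST}"
        using gen_ideal_ideal[of N ?ST] unfolding is_ideal_def
        by (auto simp: distrib_right mult.assoc)
    qed
    with p q show ?thesis by blast
  qed
  show "{p * q |p q. p \<in> gen_ideal N S \<and> q \<in> gen_ideal N T} \<subseteq> gen_ideal N ?ST"
    using key by blast
qed


lemma ideal_prod_Nil: "ideal_prod N [] = polyring N"
  by (simp add: ideal_prod_def)
lemma ideal_prod_Cons: "ideal_prod N (I # Is) = ideal_mult N I (ideal_prod N Is)"
  by (simp add: ideal_prod_def)



definition Tset :: "(nat \<Rightarrow> nat) \<Rightarrow> nat set \<Rightarrow> 'a::comm_ring_1 mpoly set" where
  "Tset a A = {monoXY (aI a (A - I)) (aI a I) | I. I \<subseteq> A}"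

lemma Tset_union:
  assumes "finite A" "finite B" "A \<inter> B = {}"
  shows "{s * t | s t. s \<in> Tset a A \<and> t \<in> Tset a B} = (Tset a (A \<union> B) :: 'a::comm_ring_1 mpoly set)"
proof (intro equalityI subsetI)
  fix x :: "'a mpoly" assume "x \<in> {s * t | s t. s \<in> Tset a A \<and> t \<in> Tset a B}"
  then obtain I J where IJ: "I \<subseteq> A" "J \<subseteq> B"
    "x = monoXY (aI a (A - I)) (aI a I) * monoXY (aI a (B - J)) (aI a J)"
    unfolding Tset_def by blast
  have fin: "finite I" "finite J" using IJ assms by (auto intro: finite_subset)
  have d1: "(A \<union> B) - (I \<union> J) = (A - I) \<union> (B - J)" using IJ assms by blast
  have "aI a ((A \<union> B) - (I \<union> J)) = aI a (A - I) + aI a (B - J)"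
    unfolding d1 aI_def using assms by (intro sum.union_disjoint) auto
  moreover have "aI a (I \<union> J) = aI a I + aI a J"
    unfolding aI_def using assms fin IJ by (intro sum.union_disjoint) auto
  ultimately have "x = monoXY (aI a ((A \<union> B) - (I \<union> J))) (aI a (I \<union> J))"
    using IJ(3) by (simp add: monoXY_mult)
  moreover have "I \<union> J \<subseteq> A \<union> B" using IJ by blast
  ultimately show "x \<in> Tset a (A \<union> B)" unfolding Tset_def by blast
next
  fix x :: "'a mpoly" assume "x \<in> Tset a (A \<union> B)"
  then obtain K where K: "K \<subseteq> A \<union> B" "x = monoXY (aI a ((A \<union> B) - K)) (aI a K)"
    unfolding Tset_def by blast
  define I where "I = K \<inter> A"
  define J where "J = K \<inter> B"
  have IJ: "I \<subseteq> A" "J \<subseteq> B" unfolding I_def J_def by auto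
  have fin: "finite I" "finite J" using IJ assms by (auto intro: finite_subset)
  have KIJ: "K = I \<union> J" using K unfolding I_def J_def by blast
  have d1: "(A \<union> B) - K = (A - I) \<union> (B - J)" using IJ assms KIJ by blast
  have "aI a ((A \<union> B) - K) = aI a (A - I) + aI a (B - J)"
    unfolding d1 aI_def using assms by (intro sum.union_disjoint) auto
  moreover have "aI a K = aI a I + aI a J"
    unfolding aI_def KIJ using assms fin IJ by (intro sum.union_disjoint) auto
  ultimately have "x = monoXY (aI a (A - I)) (aI a I) * monoXY (aI a (B - J)) (aI a J)"
    using K(2) by (simp add: monoXY_mult)
  moreover have "monoXY (aI a (A - I)) (aI a I) \<in> (Tset a A :: 'a mpoly set)"
    using IJ unfolding Tset_def by blast
  moreover have "monoXY (aI a (B - J)) (aI a J) \<in> (Tset a B :: 'a mpoly set)"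
    using IJ unfolding Tset_def by blast
  ultimately show "x \<in> {s * t | s t. s \<in> Tset a A \<and> t \<in> Tset a B}" by blast
qed

lemma Tset_single: "Tset a {x} = {monoXY (a x) 0, monoXY 0 (a x)}"
proof -
  have "{I. I \<subseteq> {x}} = {{}, {x}}" by blast
  then have "Tset a {x} = (\<lambda>I. monoXY (aI a ({x} - I)) (aI a I)) ` {{}, {x}}"
    unfolding Tset_def by blast
  then show ?thesis by (simp add: aI_def)
qed

lemma monoXY_00: "monoXY 0 0 = 1"
  unfolding monoXY_def by simp

lemma Tset_empty: "Tset a {} = {1}"
  unfolding Tset_def by (simp add: aI_def monoXY_00)

lemma polyring_ideal: "is_ideal N (polyring N)"
proof -
  have "0 \<in> polyring N" by (simp add: polyring_def)
  then show ?thesis unfolding is_ideal_def using polyring_add polyring_mult by blast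
qed

lemma polyring_gen: "polyring N = gen_ideal N {1}"
proof
  show "polyring N \<subseteq> gen_ideal N {1}"
    using gen_ideal_mult_base[of 1 "{1}" _ N] by fastforce
  show "gen_ideal N {1} \<subseteq> polyring N"
    by (rule gen_ideal_least[OF _ polyring_ideal]) (simp add: polyring_one)
qed

lemma bideal_T: "bideal N (a x) = gen_ideal N (Tset a {x})"
  unfolding bideal_def Tset_single ..

lemma ideal_prod_T:
  "distinct L \<Longrightarrow> ideal_prod N (map (\<lambda>i. bideal N (a i)) L) = (gen_ideal N (Tset a (set L)) :: 'a::comm_ring_1 mpoly set)"
proof (induction L)
  case Nil then show ?case by (simp add: ideal_prod_Nil Tset_empty polyring_gen)
next
  case (Cons x L)
  have ih: "ideal_prod N (map (\<lambda>i. bideal N (a i)) L) = (gen_ideal N (Tset a (set L)) :: 'a mpoly set)"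
    using Cons by simp
  have "ideal_prod N (map (\<lambda>i. bideal N (a i)) (x # L))
     = (ideal_mult :: _ \<Rightarrow> 'a mpoly set \<Rightarrow> _) N (bideal N (a x)) (ideal_prod N (map (\<lambda>i. bideal N (a i)) L))"
    by (simp add: ideal_prod_Cons)
  also have "\<dots> = ideal_mult N (gen_ideal N (Tset a {x})) (gen_ideal N (Tset a (set L)))"
    unfolding ih bideal_T[of N a x] ..
  also have "\<dots> = gen_ideal N (Tset a ({x} \<union> set L))"
    unfolding ideal_mult_gen using Cons.prems by (subst Tset_union) auto
  finally show ?case by simp
qed

theorem proposition4p6:
  fixes a :: "nat \<Rightarrow> nat" and n r N :: nat
  assumes "N \<ge> 2"
    and "n \<ge> 3"
    and pos: "\<forall>i\<in>{1..n+1}. a i > 0"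
    and C1: "a (n+1) = aI a {1..n-1} + 2 * a n"
    and C2: "\<forall>i\<in>{1..n-1}. a (i+1) > 2 * aI a {1..i}"
    and "3 \<le> r" and "r \<le> n"
  shows "(ideal_mult N (bideal N (a 2)) (btilde N a r :: 'k::field mpoly set)
           = ideal_prod N (map (\<lambda>i. bideal N (a i)) [1..<r+1]))
         \<and> ((ICn N a n :: 'k::field mpoly set)
           = ideal_mult N (ideal_mult N (bideal N (a 2)) (btilde N a r))
               (ideal_prod N (map (\<lambda>i. bideal N (a i)) [r+1..<n+2])))"
proof -
  let ?b = "\<lambda>i. (bideal N (a i) :: 'k mpoly set)"
  let ?m = "monoXY (aI a {3..r} - a 2) (a 3 - a 2) :: 'k mpoly"
  define A where "A = insert 1 {3..r}"
  define B where "B = {1..r}"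
  have a12: "aI a {1..2} = a 1 + a 2"
    by (simp add: aI_def numeral_2_eq_2)
  have "(2::nat) \<in> {1..n-1}" using \<open>n \<ge> 3\<close> by auto
  with C2 have "a (2+1) > 2 * aI a {1..2}" by blast
  then have a3: "a 3 > 2 * (a 1 + a 2)" using a12 by simp
  have s34: "aI a {3..r} = a 3 + aI a {4..r}"
  proof -
    have "{3..r} = insert 3 {4..r}" using \<open>3 \<le> r\<close> by auto
    then show ?thesis unfolding aI_def by simp
  qed
  have N2: "N \<ge> 2" by fact
  have listA: "set (1 # [3..<r+1]) = A" "distinct (1 # [3..<r+1])"
    unfolding A_def by auto
  have bt: "btilde N a r = (gen_ideal N (Tset a A \<union> {?m}) :: 'k mpoly set)"
    unfolding btilde_def ideal_prod_T[OF listA(2)] listA(1) gen_ideal_Un_gen ..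
  have BA: "{2} \<union> A = B" "finite A" "{2} \<inter> A = {}"
    unfolding A_def B_def using \<open>3 \<le> r\<close> by auto
  let ?X = "monoXY (a 2) 0 :: 'k mpoly" and ?Y = "monoXY 0 (a 2) :: 'k mpoly"
  have P: "{s * t | s t. s \<in> Tset a {2} \<and> t \<in> Tset a A \<union> {?m}}
      = Tset a B \<union> {?X * ?m, ?Y * ?m}"
  proof -
    have "{s * t | s t. s \<in> Tset a {2} \<and> t \<in> Tset a A \<union> {?m}}
      = {s * t | s t. s \<in> Tset a {2} \<and> t \<in> Tset a A} \<union> {?X * ?m, ?Y * ?m}"
      unfolding Tset_single by blast
    also have "{s * t | s t. s \<in> Tset a {2} \<and> t \<in> (Tset a A :: 'k mpoly set)} = Tset a B"
      using Tset_union[of "{2}" A a] BA by simp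
    finally show ?thesis .
  qed
  have mX: "?X * ?m \<in> gen_ideal N (Tset a B)"
  proof -
    have "?X * ?m = monoXY 0 (a 3 - a 2 - (a 1 + a 2)) * monoXY (aI a (B - {1,2})) (aI a {1,2})"
    proof -
      have "B - {1,2} = {3..r}" unfolding B_def by auto
      then show ?thesis using a3 s34 by (simp add: monoXY_mult aI_def)
    qed
    moreover have "monoXY (aI a (B - {1,2})) (aI a {1,2}) \<in> (Tset a B :: 'k mpoly set)"
      unfolding Tset_def B_def using \<open>3 \<le> r\<close> by auto
    ultimately show ?thesis using gen_ideal_mult_base monoXY_polyring[OF N2] by metis
  qed
  have mY: "?Y * ?m \<in> gen_ideal N (Tset a B)"
  proof -
    have eqB: "B - {3} = {1,2} \<union> {4..r}" unfolding B_def using \<open>3 \<le> r\<close> by auto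
    have "aI a (B - {3}) = a 1 + a 2 + aI a {4..r}" unfolding aI_def eqB
      by (subst sum.union_disjoint) auto
    then have "?Y * ?m = monoXY (a 3 - a 1 - 2 * a 2) 0 * monoXY (aI a (B - {3})) (aI a {3})"
      using a3 s34 by (simp add: monoXY_mult aI_def)
    moreover have "monoXY (aI a (B - {3})) (aI a {3}) \<in> (Tset a B :: 'k mpoly set)"
      unfolding Tset_def B_def using \<open>3 \<le> r\<close> by auto
    ultimately show ?thesis using gen_ideal_mult_base monoXY_polyring[OF N2] by metis
  qed
  have part1: "ideal_mult N (bideal N (a 2)) (btilde N a r :: 'k mpoly set)
      = gen_ideal N (Tset a B)"
  proof -
    have "ideal_mult N (bideal N (a 2)) (btilde N a r :: 'k mpoly set)
      = gen_ideal N (Tset a B \<union> {?X * ?m, ?Y * ?m})"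
      unfolding bt bideal_T ideal_mult_gen P ..
    also have "\<dots> = gen_ideal N (Tset a B)"
      by (rule gen_ideal_eqI) (use mX mY in \<open>auto intro: gen_ideal_base\<close>)
    finally show ?thesis .
  qed
  have listB: "distinct [1..<r+1]" "set [1..<r+1] = B" unfolding B_def by auto
  have prodB: "ideal_prod N (map (\<lambda>i. bideal N (a i)) [1..<r+1]) = (gen_ideal N (Tset a B) :: 'k mpoly set)"
    unfolding listB(2)[symmetric] by (rule ideal_prod_T[OF listB(1)])
  define D where "D = {r+1..n+1}"
  have listD: "distinct [r+1..<n+2]" "set [r+1..<n+2] = D" unfolding D_def by auto
  have prodD: "ideal_prod N (map (\<lambda>i. bideal N (a i)) [r+1..<n+2]) = (gen_ideal N (Tset a D) :: 'k mpoly set)"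
    unfolding listD(2)[symmetric] by (rule ideal_prod_T[OF listD(1)])
  have BD: "B \<union> D = {1..n+1}" "finite B" "finite D" "B \<inter> D = {}"
    unfolding B_def D_def using \<open>r \<le> n\<close> \<open>3 \<le> r\<close> by auto
  have ICn: "ICn N a n = (gen_ideal N (Tset a {1..n+1}) :: 'k mpoly set)"
  proof -
    let ?U = "{1..n+1}"
    have e1: "{monoXY (aI a ?U - c) c | c. c \<in> Cset a n} = (\<lambda>c. monoXY (aI a ?U - c) c :: 'k mpoly) ` (aI a ` Pow ?U)"
      unfolding Cset_def by blast
    have e2: "(Tset a ?U :: 'k mpoly set) = (\<lambda>I. monoXY (aI a (?U - I)) (aI a I)) ` Pow ?U"
      unfolding Tset_def by blast
    have e3: "aI a (?U - I) = aI a ?U - aI a I" if "I \<in> Pow ?U" for I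
      unfolding aI_def using that by (simp add: sum_diff_nat finite_subset)
    have "{monoXY (aI a ?U - c) c | c. c \<in> Cset a n} = (Tset a ?U :: 'k mpoly set)"
      unfolding e1 e2 image_image by (rule image_cong[OF refl]) (simp only: e3)
    then show ?thesis unfolding ICn_def by simp
  qed
  show ?thesis
  proof
    show "ideal_mult N (bideal N (a 2)) (btilde N a r :: 'k mpoly set)
           = ideal_prod N (map (\<lambda>i. bideal N (a i)) [1..<r+1])"
      unfolding part1 prodB ..
    show "(ICn N a n :: 'k mpoly set)
           = ideal_mult N (ideal_mult N (bideal N (a 2)) (btilde N a r))
               (ideal_prod N (map (\<lambda>i. bideal N (a i)) [r+1..<n+2]))"
      unfolding part1 prodD ICn ideal_mult_gen Tset_union[OF BD(2,3,4)] BD(1) ..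
  qed
qed

end
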